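(* For every $n\in\mathbb{N}$, every nonempty chain $c_k$ over $[n]$ with complementary chain $c'_{n-k}$, and every formula $\varphi$, the following are derivable in $\mathbf{CPN}_n$: (i) $\vdash_{(n)}\varphi\wedge_{(n)}\neg_{c_k}\varphi\to_{(n)}\perp_{c_k}$; (ii) $\vdash_{(n)}\perp_{c'_{n-k}}\to_{(n)}\varphi\vee_{(n)}\neg_{c_k}\varphi$; (iii) $\vdash_{(n)}\neg_{c_k}\varphi\to_{(n)}(\perp_{c_k}\to_{(n)}\varphi)$; (iv) $\vdash_{(n)}\neg_{c_k}\varphi\to_{(n)}(\perp_{c'_{n-k}}\to_{(n)}\neg_{(n)}\varphi)$; (v) $\vdash_{(n)}\neg_{c_k}\varphi\to_{(n)}(\varphi\leftrightarrow_{(n)}\perp_{c_k})$; (vi) $\vdash_{(n)}\neg_{c_k}\varphi\wedge_{(n)}\neg_{c'_{n-k}}\varphi\to_{(n)}\perp_{(n)}$; (vii) $\vdash_{(n)}\perp_{c_k}\wedge_{(n)}\perp_{c'_{n-k}}\to_{(n)}\perp_{(n)}$.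
   Context: Fix $n\in\mathbb{N}$, $n\ge 1$, and write $[n]=\{1,\dots,n\}$. Chains: a chain over $[n]$ is a finite sequence of distinct elements of $[n]$; chains with the same length and the same symbols are identified, so a chain is effectively a subset of $[n]$. $c_k$ denotes a chain with $k$ symbols, $\epsilon$ the empty chain, and $(n)$ the chain consisting of all symbols of $[n]$. For chains $c,d$: the concatenation $c\cdot d$ is the chain of symbols occurring in $c$ or in $d$; the coconcatenation $c\otimes d$ is the chain of symbols occurring in exactly one of $c,d$; $d$ is a subchain of $c$ if every symbol of $d$ is a symbol of $c$. The complementary chain $c'_{n-k}$ of $c_k$ is the chain of the symbols of $[n]$ not occurring in $c_k$. Language of $\mathbf{CPN}_n$: a countable set $P_n$ of propositional letters; constants $\perp_c$ for each chain $c$ over $[n]$ with $1\le |c|\le n-1$, and constants $\perp_{(n)}$ (contradiction) and $\top_{(n)}$ (truth); a unary connective $\neg_c$ for each nonempty chain $c$ over $[n]$ ($\neg_{(n)}$ is the strong negation; the $\neg_c$ with $|c|\le n-1$ are weak negations); a binary connective $\to_{(n)}$. Formulas: propositional letters and constants are formulas; if $\varphi,\psi$ are formulas then so are $\neg_c\varphi$ and $(\varphi\to_{(n)}\psi)$. Conventions: $\neg_\epsilon\varphi:=\varphi$, $\perp_\epsilon:=\top_{(n)}$, and $\perp_c$ for $c=(n)$ means $\perp_{(n)}$. Abbreviations: $\varphi\wedge_{(n)}\psi:=\neg_{(n)}(\varphi\to_{(n)}\neg_{(n)}\psi)$, $\varphi\vee_{(n)}\psi:=\neg_{(n)}\varphi\to_{(n)}\psi$,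 $\varphi\leftrightarrow_{(n)}\psi:=(\varphi\to_{(n)}\psi)\wedge_{(n)}(\psi\to_{(n)}\varphi)$. Axioms of $\mathbf{CPN}_n$, for all formulas $\varphi,\psi,\chi$ and all nonempty chains $c_k,c_r$ over $[n]$: (A1) $\varphi\to_{(n)}(\psi\to_{(n)}\varphi)$; (A2) $(\varphi\to_{(n)}(\psi\to_{(n)}\chi))\to_{(n)}((\varphi\to_{(n)}\psi)\to_{(n)}(\varphi\to_{(n)}\chi))$; (A3) $(\neg_{(n)}\psi\to_{(n)}\neg_{(n)}\varphi)\to_{(n)}((\neg_{(n)}\psi\to_{(n)}\varphi)\to_{(n)}\psi)$; (A4) $\varphi\to_{(n)}(\perp_{c_k}\to_{(n)}\neg_{c_k}\varphi)$; (A5) $\neg_{c_k}\neg_{c_r}\varphi\leftrightarrow_{(n)}\neg_{c_k\otimes c_r}\varphi$; (A6) $\neg_{c_k}\perp_{c_r}\leftrightarrow_{(n)}\perp_{c_k\otimes c_r}$; (A7) $\perp_{c_k}\to_{(n)}\perp_{c_r}$, whenever $c_r$ is a subchain of $c_k$. The only rule of inference is modus ponens (from $\varphi$ and $\varphi\to_{(n)}\psi$ infer $\psi$). For a set $\Sigma$ of formulas, $\Sigma\vdash_{(n)}\varphi$ means there is a finite sequence of formulas ending with $\varphi$, each of which is an axiom, a member of $\Sigma$, or obtained from two earlier members by modus ponens; $\vdash_{(n)}\varphi$ means $\emptyset\vdash_{(n)}\varphi$. *)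

theory Defs
  imports Main
begin

(* Chains over [n] are identified with subsets of {1..n}.
   Bot c is the constant \<bottom>_c; Bot {} is \<top>_(n) (convention \<bottom>_\<epsilon> := \<top>_(n)),
   Bot {1..n} is \<bottom>_(n). *)
datatype form =
    PVar nat
  | Bot "nat set"
  | Neg "nat set" form
  | Imp form form

abbreviation Top :: form where "Top \<equiv> Bot {}"

definition neg :: "nat set \<Rightarrow> form \<Rightarrow> form" where
  "neg c \<phi> = (if c = {} then \<phi> else Neg c \<phi>)"

fun wf :: "nat \<Rightarrow> form \<Rightarrow> bool" where
  "wf n (PVar p) = True"
| "wf n (Bot c) = (c \<subseteq> {1..n})"
| "wf n (Neg c \<phi>) = (c \<noteq> {} \<and> c \<subseteq> {1..n} \<and> wf n \<phi>)"
| "wf n (Imp \<phi> \<psi>) = (wf n \<phi> \<and> wf n \<psi>)"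

definition full :: "nat \<Rightarrow> nat set" where "full n = {1..n}"

definition SNeg :: "nat \<Rightarrow> form \<Rightarrow> form" where "SNeg n \<phi> = Neg (full n) \<phi>"
definition Conj :: "nat \<Rightarrow> form \<Rightarrow> form \<Rightarrow> form" where
  "Conj n \<phi> \<psi> = SNeg n (Imp \<phi> (SNeg n \<psi>))"
definition Disj :: "nat \<Rightarrow> form \<Rightarrow> form \<Rightarrow> form" where
  "Disj n \<phi> \<psi> = Imp (SNeg n \<phi>) \<psi>"
definition Iff :: "nat \<Rightarrow> form \<Rightarrow> form \<Rightarrow> form" where
  "Iff n \<phi> \<psi> = Conj n (Imp \<phi> \<psi>) (Imp \<psi> \<phi>)"

definition cocat :: "nat set \<Rightarrow> nat set \<Rightarrow> nat set" where
  "cocat c d = (c - d) \<union> (d - c)"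

definition chain :: "nat \<Rightarrow> nat set \<Rightarrow> bool" where
  "chain n c \<longleftrightarrow> c \<noteq> {} \<and> c \<subseteq> {1..n}"

inductive axiom :: "nat \<Rightarrow> form \<Rightarrow> bool" for n where
  A1: "\<lbrakk>wf n \<phi>; wf n \<psi>\<rbrakk> \<Longrightarrow> axiom n (Imp \<phi> (Imp \<psi> \<phi>))"
| A2: "\<lbrakk>wf n \<phi>; wf n \<psi>; wf n \<chi>\<rbrakk> \<Longrightarrow>
     axiom n (Imp (Imp \<phi> (Imp \<psi> \<chi>)) (Imp (Imp \<phi> \<psi>) (Imp \<phi> \<chi>)))"
| A3: "\<lbrakk>wf n \<phi>; wf n \<psi>\<rbrakk> \<Longrightarrow>
     axiom n (Imp (Imp (SNeg n \<psi>) (SNeg n \<phi>)) (Imp (Imp (SNeg n \<psi>) \<phi>) \<psi>))"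
| A4: "\<lbrakk>wf n \<phi>; chain n c\<rbrakk> \<Longrightarrow> axiom n (Imp \<phi> (Imp (Bot c) (Neg c \<phi>)))"
| A5: "\<lbrakk>wf n \<phi>; chain n c; chain n d\<rbrakk> \<Longrightarrow>
     axiom n (Iff n (Neg c (Neg d \<phi>)) (neg (cocat c d) \<phi>))"
| A6: "\<lbrakk>chain n c; chain n d\<rbrakk> \<Longrightarrow>
     axiom n (Iff n (Neg c (Bot d)) (Bot (cocat c d)))"
| A7: "\<lbrakk>chain n c; chain n d; d \<subseteq> c\<rbrakk> \<Longrightarrow> axiom n (Imp (Bot c) (Bot d))"

inductive deriv :: "nat \<Rightarrow> form set \<Rightarrow> form \<Rightarrow> bool" for n \<Sigma> where
  ax: "axiom n \<phi> \<Longrightarrow> deriv n \<Sigma> \<phi>"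
| hyp: "\<phi> \<in> \<Sigma> \<Longrightarrow> deriv n \<Sigma> \<phi>"
| mp: "\<lbrakk>deriv n \<Sigma> \<phi>; deriv n \<Sigma> (Imp \<phi> \<psi>)\<rbrakk> \<Longrightarrow> deriv n \<Sigma> \<psi>"

abbreviation provable :: "nat \<Rightarrow> form \<Rightarrow> bool" where "provable n \<phi> \<equiv> deriv n {} \<phi>"

end

theory Submission
  imports Defs
begin

definition W :: "nat \<Rightarrow> form set \<Rightarrow> bool" where "W n G \<longleftrightarrow> (\<forall>x\<in>G. wf n x)"

lemma W_insert[simp]: "W n (insert a G) \<longleftrightarrow> wf n a \<and> W n G"
  by (auto simp: W_def)
lemma W_empty[simp]: "W n {}" by (simp add: W_def)

lemma wf_SNeg[simp]: "n \<ge> 1 \<Longrightarrow> wf n (SNeg n a) = wf n a"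
  by (auto simp: SNeg_def full_def)
lemma wf_Conj[simp]: "n \<ge> 1 \<Longrightarrow> wf n (Conj n a b) = (wf n a \<and> wf n b)"
  by (auto simp: Conj_def)
lemma wf_Iff[simp]: "n \<ge> 1 \<Longrightarrow> wf n (Iff n a b) = (wf n a \<and> wf n b)"
  by (auto simp: Iff_def)
lemma wf_neg[simp]: "wf n (neg c a) = (wf n a \<and> c \<subseteq> {1..n})"
  by (auto simp: neg_def)

lemma cocat_sub: "c \<subseteq> {1..n} \<Longrightarrow> d \<subseteq> {1..n} \<Longrightarrow> cocat c d \<subseteq> {1..n}"
  by (auto simp: cocat_def)

lemma axiom_wf: "axiom n a \<Longrightarrow> n \<ge> 1 \<Longrightarrow> wf n a"
  by (induction rule: axiom.induct) (auto simp: chain_def cocat_def)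

lemma deriv_wf: "deriv n G a \<Longrightarrow> n \<ge> 1 \<Longrightarrow> W n G \<Longrightarrow> wf n a"
  by (induction rule: deriv.induct) (auto simp: axiom_wf W_def)

lemma mono: "deriv n G a \<Longrightarrow> G \<subseteq> H \<Longrightarrow> deriv n H a"
  by (induction rule: deriv.induct) (auto intro: deriv.intros)

lemma ax1: "wf n a \<Longrightarrow> wf n b \<Longrightarrow> deriv n G (Imp a (Imp b a))"
  by (rule deriv.ax, rule axiom.A1)
lemma ax2: "wf n a \<Longrightarrow> wf n b \<Longrightarrow> wf n c \<Longrightarrow>
  deriv n G (Imp (Imp a (Imp b c)) (Imp (Imp a b) (Imp a c)))"
  by (rule deriv.ax, rule axiom.A2)

lemma idt: "wf n a \<Longrightarrow> deriv n G (Imp a a)"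
proof -
  assume a: "wf n a"
  have "deriv n G (Imp (Imp a (Imp (Imp a a) a)) (Imp (Imp a (Imp a a)) (Imp a a)))"
    using a by (simp add: ax2)
  moreover have "deriv n G (Imp a (Imp (Imp a a) a))" using a by (simp add: ax1)
  ultimately have "deriv n G (Imp (Imp a (Imp a a)) (Imp a a))" by (rule deriv.mp[rotated])
  moreover have "deriv n G (Imp a (Imp a a))" using a by (simp add: ax1)
  ultimately show ?thesis by (rule deriv.mp[rotated])
qed

lemma dt: "deriv n (insert a G) b \<Longrightarrow> n \<ge> 1 \<Longrightarrow> wf n a \<Longrightarrow> W n G \<Longrightarrow> deriv n G (Imp a b)"
proof (induction rule: deriv.induct)
  case (ax p)
  then have "wf n p" using axiom_wf by blast
  then show ?case using ax by (meson ax1 deriv.ax deriv.mp)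
next
  case (hyp p)
  show ?case
  proof (cases "p = a")
    case True then show ?thesis using hyp by (simp add: idt)
  next
    case False
    then have "p \<in> G" "wf n p" using hyp by (auto simp: W_def)
    then show ?thesis using hyp by (meson ax1 deriv.hyp deriv.mp)
  qed
next
  case (mp p q)
  have wpq: "wf n (Imp p q)" using mp deriv_wf[OF mp.hyps(2)] by auto
  then have wp: "wf n p" and wq: "wf n q" by auto
  have "deriv n G (Imp (Imp a (Imp p q)) (Imp (Imp a p) (Imp a q)))"
    using mp wp wq by (simp add: ax2)
  then show ?case using mp by (meson deriv.mp)
qed

lemma undt: "deriv n G (Imp a b) \<Longrightarrow> deriv n (insert a G) b"
  by (meson deriv.hyp deriv.mp insertI1 mono subset_insertI)

lemma reductio:
  assumes n: "n \<ge> 1" and G: "W n G" and wa: "wf n a" and wb: "wf n b"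
    and h1: "deriv n (insert (SNeg n a) G) b" and h2: "deriv n (insert (SNeg n a) G) (SNeg n b)"
  shows "deriv n G a"
proof -
  have 1: "deriv n G (Imp (SNeg n a) b)" using dt[OF h1] n wa G by simp
  have 2: "deriv n G (Imp (SNeg n a) (SNeg n b))" using dt[OF h2] n wa G by simp
  have "deriv n G (Imp (Imp (SNeg n a) (SNeg n b)) (Imp (Imp (SNeg n a) b) a))"
    by (rule deriv.ax, rule axiom.A3[OF wb wa])
  then show ?thesis using 1 2 by (meson deriv.mp)
qed

lemma explosion:
  assumes n: "n \<ge> 1" and G: "W n G" and wa: "wf n a" and wc: "wf n c"
    and h1: "deriv n G a" and h2: "deriv n G (SNeg n a)"
  shows "deriv n G c"
  by (rule reductio[OF n G wc wa]) (auto intro: mono[OF h1] mono[OF h2])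

lemma dne:
  assumes n: "n \<ge> 1" and G: "W n G" and wa: "wf n a"
    and h: "deriv n G (SNeg n (SNeg n a))"
  shows "deriv n G a"
  proof (rule reductio[OF n G wa, of "SNeg n a"])
  show "wf n (SNeg n a)" using wf_SNeg[OF n] wa by simp
qed (auto intro: deriv.hyp mono[OF h])

lemma casesF:
  assumes n: "n \<ge> 1" and G: "W n G" and wx: "wf n x" and wc: "wf n c"
    and h1: "deriv n (insert x G) c" and h2: "deriv n (insert (SNeg n x) G) c"
  shows "deriv n G c"
proof -
  let ?G = "insert (SNeg n c) G"
  have G': "W n ?G" using G wc n by simp
  have nx: "deriv n ?G (SNeg n x)"
  proof (rule reductio[OF n G' _ wc])
    show "wf n (SNeg n x)" using wx n by simp
    let ?H = "insert (SNeg n (SNeg n x)) ?G"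
    have H: "W n ?H" using G' wx n by simp
    have "deriv n ?H x" by (rule dne[OF n H wx]) (rule deriv.hyp, simp)
    moreover have "deriv n ?H (Imp x c)" using dt[OF h1 n wx G] mono by blast
    ultimately show "deriv n ?H c" by (rule deriv.mp)
    show "deriv n ?H (SNeg n c)" by (rule deriv.hyp, simp)
  qed
  have "deriv n ?G (Imp (SNeg n x) c)" using dt[OF h2 n _ G] wx n mono by (meson subset_insertI wf_SNeg)
  then have "deriv n ?G c" using nx by (meson deriv.mp)
  then show ?thesis
    by (intro reductio[OF n G wc wc]) (auto intro: deriv.hyp)
qed


lemma sets:
  assumes "c \<subseteq> full n"
  shows "cocat c c = {}" "cocat (full n) c = full n - c" "cocat (full n - c) c = full n"
    "cocat (full n - c) (full n) = c" "full n - (full n - c) = c" "cocat c (full n - c) = full n"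
  using assms by (auto simp: cocat_def)

context
  fixes n :: nat
  assumes n1: "n \<ge> 1"
begin

lemmas ws[simp] = wf_SNeg[OF n1] wf_Conj[OF n1] wf_Iff[OF n1]

lemma chain_full: "chain n (full n)" using n1 by (auto simp: chain_def full_def)

lemma conjE1:
  assumes G: "W n G" and wa: "wf n a" and wb: "wf n b" and h: "deriv n G (Conj n a b)"
  shows "deriv n G a"
proof (rule reductio[OF n1 G wa, of "Imp a (SNeg n b)"])
  let ?G = "insert (SNeg n a) G"
  show "wf n (Imp a (SNeg n b))" using wa wb by simp
  have "deriv n (insert a ?G) (SNeg n b)"
    by (rule explosion[OF n1 _ wa]) (auto simp: G wa wb intro: deriv.hyp)
  then show "deriv n ?G (Imp a (SNeg n b))" using dt n1 wa G by simp
  show "deriv n ?G (SNeg n (Imp a (SNeg n b)))" using mono[OF h] by (auto simp: Conj_def)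
qed

lemma conjE2:
  assumes G: "W n G" and wa: "wf n a" and wb: "wf n b" and h: "deriv n G (Conj n a b)"
  shows "deriv n G b"
proof (rule reductio[OF n1 G wb, of "Imp a (SNeg n b)"])
  let ?G = "insert (SNeg n b) G"
  show "wf n (Imp a (SNeg n b))" using wa wb by simp
  have "deriv n (insert a ?G) (SNeg n b)" by (auto intro: deriv.hyp)
  then show "deriv n ?G (Imp a (SNeg n b))" using dt n1 wa wb G by simp
  show "deriv n ?G (SNeg n (Imp a (SNeg n b)))" using mono[OF h] by (auto simp: Conj_def)
qed

lemma conjI:
  assumes G: "W n G" and wa: "wf n a" and wb: "wf n b" and ha: "deriv n G a" and hb: "deriv n G b"
  shows "deriv n G (Conj n a b)"
  unfolding Conj_def
proof (rule reductio[OF n1 G _ wb])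
  let ?X = "SNeg n (Imp a (SNeg n b))"
  let ?G = "insert (SNeg n ?X) G"
  show "wf n ?X" using wa wb by simp
  show "deriv n ?G b" using mono[OF hb] by auto
  have "deriv n ?G (Imp a (SNeg n b))"
    by (rule dne[OF n1]) (auto simp: G wa wb intro: deriv.hyp)
  then show "deriv n ?G (SNeg n b)" using mono[OF ha] by (meson deriv.mp subset_insertI)
qed

lemma a4r: "chain n c \<Longrightarrow> wf n a \<Longrightarrow> deriv n G a \<Longrightarrow> deriv n G (Bot c) \<Longrightarrow> deriv n G (Neg c a)"
  by (meson axiom.A4 deriv.ax deriv.mp)

lemma a5r:
  assumes G: "W n G" and "chain n c" "chain n d" "wf n a" "deriv n G (Neg c (Neg d a))"
  shows "deriv n G (neg (cocat c d) a)"
proof -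
  have ax: "deriv n G (Iff n (Neg c (Neg d a)) (neg (cocat c d) a))"
    using assms by (intro deriv.ax axiom.A5)
  have w: "wf n (Neg c (Neg d a))" "wf n (neg (cocat c d) a)"
    using assms by (auto simp: chain_def cocat_def)
  have "deriv n G (Imp (Neg c (Neg d a)) (neg (cocat c d) a))"
    using conjE1[OF G _ _ ax[unfolded Iff_def]] w by simp
  then show ?thesis using assms by (meson deriv.mp)
qed

lemma a6r:
  assumes G: "W n G" and "chain n c" "chain n d" "deriv n G (Neg c (Bot d))"
  shows "deriv n G (Bot (cocat c d))"
proof -
  have ax: "deriv n G (Iff n (Neg c (Bot d)) (Bot (cocat c d)))"
    using assms by (intro deriv.ax axiom.A6)
  have w: "wf n (Neg c (Bot d))" "wf n (Bot (cocat c d))"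
    using assms by (auto simp: chain_def cocat_def)
  have "deriv n G (Imp (Neg c (Bot d)) (Bot (cocat c d)))"
    using conjE1[OF G _ _ ax[unfolded Iff_def]] w by simp
  then show ?thesis using assms by (meson deriv.mp)
qed

lemma L3:
  assumes G: "W n G" and c: "chain n c" and w: "wf n p"
    and h1: "deriv n G (Neg c p)" and h2: "deriv n G (Bot c)"
  shows "deriv n G p"
proof -
  have "deriv n G (Neg c (Neg c p))" using a4r[OF c _ h1 h2] c w by (simp add: chain_def)
  then have "deriv n G (neg (cocat c c) p)" using a5r[OF G c c w] by simp
  then show ?thesis using c sets(1)[of c n] by (simp add: chain_def full_def neg_def)
qed

lemma L4:
  assumes G: "W n G" and c: "chain n c" and w: "wf n p"
    and h1: "deriv n G (Neg c p)" and h2: "deriv n G (Bot (full n - c))"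
  shows "deriv n G (SNeg n p)"
proof (cases "c = full n")
  case True then show ?thesis using h1 by (simp add: SNeg_def)
next
  case False
  have cs: "c \<subseteq> full n" using c by (simp add: chain_def full_def)
  have c': "chain n (full n - c)" using False cs by (auto simp: chain_def full_def)
  have "deriv n G (Neg (full n - c) (Neg c p))" using a4r[OF c' _ h1 h2] c w by (simp add: chain_def)
  then have "deriv n G (neg (cocat (full n - c) c) p)" using a5r[OF G c' c w] by simp
  then show ?thesis using sets(3)[OF cs] chain_full by (simp add: chain_def neg_def SNeg_def)
qed

lemma L1:
  assumes G: "W n G" and c: "chain n c" and w: "wf n p"
    and h1: "deriv n G p" and h2: "deriv n G (Neg c p)"
  shows "deriv n G (Bot c)"
proof (rule reductio[OF n1 G _ w])
  let ?G = "insert (SNeg n (Bot c)) G"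
  have cs: "c \<subseteq> full n" using c by (simp add: chain_def full_def)
  show wb: "wf n (Bot c)" using c by (simp add: chain_def)
  have G': "W n ?G" using G wb by simp
  show "deriv n ?G p" using mono[OF h1] by auto
  show "deriv n ?G (SNeg n p)"
  proof (cases "c = full n")
    case True then show ?thesis using mono[OF h2] by (auto simp: SNeg_def)
  next
    case False
    have "deriv n ?G (Neg (full n) (Bot c))" by (auto simp: SNeg_def intro: deriv.hyp)
    then have "deriv n ?G (Bot (cocat (full n) c))" using a6r[OF G' chain_full c] by simp
    then have "deriv n ?G (Bot (full n - c))" using sets(2)[OF cs] by simp
    then show ?thesis using L4[OF G' c w] mono[OF h2] by auto
  qed
qed

lemma L2:
  assumes G: "W n G" and c: "chain n c" and w: "wf n p"
    and h1: "deriv n G (Bot (full n - c))" and h2: "deriv n G (SNeg n p)"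
  shows "deriv n G (Neg c p)"
proof (cases "c = full n")
  case True then show ?thesis using h2 by (simp add: SNeg_def)
next
  case False
  have cs: "c \<subseteq> full n" using c by (simp add: chain_def full_def)
  have c': "chain n (full n - c)" using False cs by (auto simp: chain_def full_def)
  have "deriv n G (Neg (full n - c) (Neg (full n) p))"
    using a4r[OF c' _ h2 h1] w by (simp add: ws) (simp add: SNeg_def)
  then have "deriv n G (neg (cocat (full n - c) (full n)) p)" using a5r[OF G c' chain_full w] by simp
  then show ?thesis using sets(4)[OF cs] c by (simp add: chain_def neg_def)
qed

end


theorem mainTheorem5:
  fixes n :: nat and c :: "nat set" and \<phi> :: form
  assumes "n \<ge> 1" and "chain n c" and "wf n \<phi>"
  shows "provable n (Imp (Conj n \<phi> (Neg c \<phi>)) (Bot c))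
    \<and> provable n (Imp (Bot (full n - c)) (Disj n \<phi> (Neg c \<phi>)))
    \<and> provable n (Imp (Neg c \<phi>) (Imp (Bot c) \<phi>))
    \<and> provable n (Imp (Neg c \<phi>) (Imp (Bot (full n - c)) (SNeg n \<phi>)))
    \<and> provable n (Imp (Neg c \<phi>) (Iff n \<phi> (Bot c)))
    \<and> provable n (Imp (Conj n (Neg c \<phi>) (neg (full n - c) \<phi>)) (Bot (full n)))
    \<and> provable n (Imp (Conj n (Bot c) (Bot (full n - c))) (Bot (full n)))"
proof -
  note n1 = assms(1) and c = assms(2) and w = assms(3)
  note ws[simp] = wf_SNeg[OF n1] wf_Conj[OF n1] wf_Iff[OF n1]
  have cs: "c \<subseteq> full n" using c by (simp add: chain_def full_def)
  have wc: "wf n (Bot c)" using c by (simp add: chain_def)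
  have wc': "wf n (Bot (full n - c))" by (simp add: full_def)
  have wf_full: "wf n (Bot (full n))" by (simp add: full_def)
  have wn: "wf n (Neg c \<phi>)" using c w by (simp add: chain_def)
  have wn': "wf n (neg (full n - c) \<phi>)" using w by (simp add: full_def)
  have c'cases: "c = full n \<or> chain n (full n - c)" using cs by (auto simp: chain_def full_def)
  have cc': "full n - (full n - c) = c" using sets(5)[OF cs] .
  have hyp: "\<And>x G. x \<in> G \<Longrightarrow> deriv n G x" by (rule deriv.hyp)
  have i: "provable n (Imp (Conj n \<phi> (Neg c \<phi>)) (Bot c))"
  proof -
    let ?G = "{Conj n \<phi> (Neg c \<phi>)}"
    have G: "W n ?G" using w wn ws by simp
    have h: "deriv n ?G (Conj n \<phi> (Neg c \<phi>))" by (rule hyp) simp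
    have "deriv n ?G (Bot c)"
      using L1[OF n1 G c w conjE1[OF n1 G w wn h] conjE2[OF n1 G w wn h]] .
    then show ?thesis using dt[OF _ n1] w wn ws by simp
  qed
  have ii: "provable n (Imp (Bot (full n - c)) (Disj n \<phi> (Neg c \<phi>)))"
  proof -
    let ?Gb = "{Bot (full n - c)}"
    let ?G = "insert (SNeg n \<phi>) ?Gb"
    have G0: "W n ?Gb" using wc' by simp
    have G: "W n ?G" using G0 wf_SNeg[OF n1, of \<phi>] w by (simp only: W_insert)
    have "deriv n ?G (Neg c \<phi>)" by (rule L2[OF n1 G c w]) (auto intro: hyp)
    then have "deriv n ?Gb (Disj n \<phi> (Neg c \<phi>))" unfolding Disj_def
      by (rule dt[OF _ n1 _ G0]) (simp add: w)
    then show ?thesis using dt[OF _ n1] wc' by simp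
  qed
  have iii: "provable n (Imp (Neg c \<phi>) (Imp (Bot c) \<phi>))"
  proof -
    let ?Gb = "{Neg c \<phi>}"
    let ?G = "insert (Bot c) ?Gb"
    have G0: "W n ?Gb" using wn by simp
    have G: "W n ?G" using G0 wc by simp
    have "deriv n ?G \<phi>" by (rule L3[OF n1 G c w]) (auto intro: hyp)
    then have "deriv n ?Gb (Imp (Bot c) \<phi>)" using dt[OF _ n1] G0 wc by simp
    then show ?thesis using dt[OF _ n1] wn by simp
  qed
  have iv: "provable n (Imp (Neg c \<phi>) (Imp (Bot (full n - c)) (SNeg n \<phi>)))"
  proof -
    let ?Gb = "{Neg c \<phi>}"
    let ?G = "insert (Bot (full n - c)) ?Gb"
    have G0: "W n ?Gb" using wn by simp
    have G: "W n ?G" using G0 wc' by simp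
    have "deriv n ?G (SNeg n \<phi>)" by (rule L4[OF n1 G c w]) (auto intro: hyp)
    then have "deriv n ?Gb (Imp (Bot (full n - c)) (SNeg n \<phi>))" using dt[OF _ n1] G0 wc' by simp
    then show ?thesis using dt[OF _ n1] wn by simp
  qed
  have v: "provable n (Imp (Neg c \<phi>) (Iff n \<phi> (Bot c)))"
  proof -
    let ?Gb = "{Neg c \<phi>}"
    have G0: "W n ?Gb" using wn by simp
    have G1: "W n (insert \<phi> ?Gb)" using G0 w by simp
    have G2: "W n (insert (Bot c) ?Gb)" using G0 wc by simp
    have "deriv n (insert \<phi> ?Gb) (Bot c)" by (rule L1[OF n1 G1 c w]) (auto intro: hyp)
    then have a: "deriv n ?Gb (Imp \<phi> (Bot c))" using dt[OF _ n1] G0 w by simp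
    have "deriv n (insert (Bot c) ?Gb) \<phi>" by (rule L3[OF n1 G2 c w]) (auto intro: hyp)
    then have b: "deriv n ?Gb (Imp (Bot c) \<phi>)" using dt[OF _ n1] G0 wc by simp
    have "deriv n ?Gb (Iff n \<phi> (Bot c))" unfolding Iff_def
      by (rule conjI[OF n1 G0 _ _ a b]) (use w wc in simp_all)
    then show ?thesis using dt[OF _ n1] wn by simp
  qed
  have vi: "provable n (Imp (Conj n (Neg c \<phi>) (neg (full n - c) \<phi>)) (Bot (full n)))"
  proof -
    let ?G = "{Conj n (Neg c \<phi>) (neg (full n - c) \<phi>)}"
    have G: "W n ?G" using wn wn' ws by simp
    have h: "deriv n ?G (Conj n (Neg c \<phi>) (neg (full n - c) \<phi>))" by (rule hyp) simp
    have h1: "deriv n ?G (Neg c \<phi>)" using conjE1[OF n1 G wn wn' h] .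
    have h2: "deriv n ?G (neg (full n - c) \<phi>)" using conjE2[OF n1 G wn wn' h] .
    have "deriv n ?G (Bot (full n))"
    proof (cases "c = full n")
      case True
      then have "deriv n ?G \<phi>" "deriv n ?G (SNeg n \<phi>)" using h1 h2 by (simp_all add: neg_def SNeg_def)
      then show ?thesis using explosion[OF n1 G w wf_full] by simp
    next
      case False
      then have c': "chain n (full n - c)" using c'cases by simp
      have h2': "deriv n ?G (Neg (full n - c) \<phi>)" using h2 c' by (simp add: neg_def chain_def)
      show ?thesis
      proof (rule casesF[OF n1 G wc wf_full])
        let ?H = "insert (Bot c) ?G"
        have H: "W n ?H" using G wc by simp
        have "deriv n ?H \<phi>" using L3[OF n1 H c w mono[OF h1]] by (auto intro: hyp)
        moreover have "deriv n ?H (SNeg n \<phi>)" using L4[OF n1 H c' w mono[OF h2']] cc' by (auto intro: hyp)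
        ultimately show "deriv n ?H (Bot (full n))" using explosion[OF n1 H w wf_full] by simp
      next
        let ?H = "insert (SNeg n (Bot c)) ?G"
        have H: "W n ?H" using G wc ws by simp
        have "deriv n ?H (Neg (full n) (Bot c))" by (rule hyp) (simp add: SNeg_def)
        then have "deriv n ?H (Bot (cocat (full n) c))" using a6r[OF n1 H chain_full[OF n1] c] by simp
        then have b': "deriv n ?H (Bot (full n - c))" using sets(2)[OF cs] by simp
        have "deriv n ?H \<phi>" using L3[OF n1 H c' w mono[OF h2'] b'] by auto
        moreover have "deriv n ?H (SNeg n \<phi>)" using L4[OF n1 H c w mono[OF h1] b'] by auto
        ultimately show "deriv n ?H (Bot (full n))" using explosion[OF n1 H w wf_full] by simp
      qed
    qed
    then show ?thesis using dt[OF _ n1] wn wn' ws by simp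
  qed
  have vii: "provable n (Imp (Conj n (Bot c) (Bot (full n - c))) (Bot (full n)))"
  proof -
    let ?G = "{Conj n (Bot c) (Bot (full n - c))}"
    have G: "W n ?G" using wc wc' ws by simp
    have h: "deriv n ?G (Conj n (Bot c) (Bot (full n - c)))" by (rule hyp) simp
    have h1: "deriv n ?G (Bot c)" using conjE1[OF n1 G wc wc' h] .
    have h2: "deriv n ?G (Bot (full n - c))" using conjE2[OF n1 G wc wc' h] .
    have "deriv n ?G (Bot (full n))"
    proof (cases "c = full n")
      case True then show ?thesis using h1 by simp
    next
      case False
      then have c': "chain n (full n - c)" using c'cases by simp
      have "deriv n ?G (Neg c (Bot (full n - c)))" using a4r[OF n1 c wc' h2 h1] .
      then have "deriv n ?G (Bot (cocat c (full n - c)))" using a6r[OF n1 G c c'] by simp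
      then show ?thesis using sets(6)[OF cs] by simp
    qed
    then show ?thesis using dt[OF _ n1] wc wc' ws by simp
  qed
  show ?thesis using i ii iii iv v vi vii by blast
qed

end
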